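(* Consider joint conditional distributions $p(A_a,B_b|a,b)$ for $a,b\in\{1,2,3\}$ and $A_a,B_b\in\{0,1\}$ such that $A_a=B_b$ with probability 1 whenever $a=b$ and $A_a\neq B_b$ with probability 1 whenever $a\neq b$. If they satisfy the no-signaling conditions that $\sum_{B_b}p(A_a,B_b|a,b)$ is independent of $b$ and $\sum_{A_a}p(A_a,B_b|a,b)$ is independent of $a$, then for all $a\neq b$: $p(0,1|a,b)=p(1,0|a,b)=\tfrac12$, and for all $a=b$: $p(0,0|a,b)=p(1,1|a,b)=\tfrac12$. *)

theory Defs
  imports Complex_Main
begin

end

theory Submission
  imports Defs
begin

theorem mainTheorem10:
  fixes p :: "nat \<Rightarrow> nat \<Rightarrow> nat \<Rightarrow> nat \<Rightarrow> real"
  assumes nonneg: "\<And>x y a b. x \<in> {0,1} \<Longrightarrow> y \<in> {0,1} \<Longrightarrow> a \<in> {1,2,3} \<Longrightarrow> b \<in> {1,2,3} \<Longrightarrow> p x y a b \<ge> 0"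
    and normalized: "\<And>a b. a \<in> {1,2,3} \<Longrightarrow> b \<in> {1,2,3} \<Longrightarrow> (\<Sum>x\<in>{0,1}. \<Sum>y\<in>{0,1}. p x y a b) = 1"
    and corr: "\<And>x y a. a \<in> {1,2,3} \<Longrightarrow> x \<in> {0,1} \<Longrightarrow> y \<in> {0,1} \<Longrightarrow> x \<noteq> y \<Longrightarrow> p x y a a = 0"
    and anticorr: "\<And>x a b. a \<in> {1,2,3} \<Longrightarrow> b \<in> {1,2,3} \<Longrightarrow> a \<noteq> b \<Longrightarrow> x \<in> {0,1} \<Longrightarrow> p x x a b = 0"
    and nosig_A: "\<And>x a b b'. x \<in> {0,1} \<Longrightarrow> a \<in> {1,2,3} \<Longrightarrow> b \<in> {1,2,3} \<Longrightarrow> b' \<in> {1,2,3} \<Longrightarrow>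
        (\<Sum>y\<in>{0,1}. p x y a b) = (\<Sum>y\<in>{0,1}. p x y a b')"
    and nosig_B: "\<And>y a a' b. y \<in> {0,1} \<Longrightarrow> a \<in> {1,2,3} \<Longrightarrow> a' \<in> {1,2,3} \<Longrightarrow> b \<in> {1,2,3} \<Longrightarrow>
        (\<Sum>x\<in>{0,1}. p x y a b) = (\<Sum>x\<in>{0,1}. p x y a' b)"
  shows "(\<forall>a\<in>{1,2,3}. \<forall>b\<in>{1,2,3}. a \<noteq> b \<longrightarrow> p 0 1 a b = 1/2 \<and> p 1 0 a b = 1/2)
       \<and> (\<forall>a\<in>{1,2,3}. p 0 0 a a = 1/2 \<and> p 1 1 a a = 1/2)"
proof -
  note F = normalized[of 1 1] nosig_A[of 0 1 1 1] nosig_B[of 0 1 1 1] nosig_A[of 1 1 1 1] nosig_B[of 1 1 1 1] normalized[of 1 2] nosig_A[of 0 1 2 1] nosig_B[of 0 1 1 2] anticorr[of 1 2 0] nosig_A[of 1 1 2 1] nosig_B[of 1 1 1 2] anticorr[of 1 2 1] normalized[of 1 3] nosig_A[of 0 1 3 1] nosig_B[of 0 1 1 3] anticorr[of 1 3 0] nosig_A[of 1 1 3 1] nosig_B[of 1 1 1 3] anticorr[of 1 3 1] corr[of 1 0 1] corr[of 1 1 0] normalized[of 2 1] nosig_A[of 0 2 1 1] nosig_B[of 0 2 1 1] anticorr[of 2 1 0] nosig_A[of 1 2 1 1] nosig_B[of 1 2 1 1] anticorr[of 2 1 1] normalized[of 2 2] nosig_A[of 0 2 2 1] nosig_B[of 0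 2 1 2] nosig_A[of 1 2 2 1] nosig_B[of 1 2 1 2] normalized[of 2 3] nosig_A[of 0 2 3 1] nosig_B[of 0 2 1 3] anticorr[of 2 3 0] nosig_A[of 1 2 3 1] nosig_B[of 1 2 1 3] anticorr[of 2 3 1] corr[of 2 0 1] corr[of 2 1 0] normalized[of 3 1] nosig_A[of 0 3 1 1] nosig_B[of 0 3 1 1] anticorr[of 3 1 0] nosig_A[of 1 3 1 1] nosig_B[of 1 3 1 1] anticorr[of 3 1 1] normalized[of 3 2] nosig_A[of 0 3 2 1] nosig_B[of 0 3 1 2] anticorr[of 3 2 0] nosig_A[of 1 3 2 1] nosig_B[of 1 3 1 2] anticorr[of 3 2 1] normalized[of 3 3] nosig_A[of 0 3 3 1] nosig_B[of 0 3 1 3] nosig_A[of 1 3 3 1] nosig_B[of 1 3 1 3] corr[of 3 0 1] corr[of 3 1 0]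
  show ?thesis using F by (simp add: insert_commute)
qed

end
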